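(* There exist constants $c_1,c_2,c_3>0$ and, for every integer $t\ge1$, a graph $G_t$ with $n_t$ vertices and $m_t$ edges, where $c_1t\le n_t\le c_2t$ and $c_1t^2\le m_t\le c_2t^2$, together with an LA-succinct clique cover of $G_t$ whose admissibility sets $\mathcal{A}$ satisfy $\|\mathcal{A}\|\ge c_3\,n_tm_t$. In particular $\|\mathcal{A}\|=\Theta(nm)$ can occur.
   Context: All graphs are finite, simple, undirected, with no isolated vertices; $N[v]=N(v)\cup\{v\}$ is the closed neighbourhood. A clique is a vertex set inducing a complete subgraph. $\|\mathcal{F}\|:=\sum_{F\in\mathcal{F}}|F|$. A clique cover is an indexed family of cliques covering every edge. LA-succinct construction: maintain a family $\mathcal{C}$ of cliques of $G$, initially empty; an edge is uncovered if it is contained in no member. Update rule on an uncovered edge $\{u,v\}$: (1) if some $C_\ell\in\mathcal{C}$ has $C_\ell\cup\{u,v\}$ a clique of $G$, choose exactly one such $C_\ell$ and replace it by $C_\ell\cup\{u,v\}$; (2) otherwise add a new member $\{u,v\}$ with a new label. Step (1) is always applied when applicable. An LA-succinct clique cover is a clique cover obtained from the empty family by repeatedly applying this rule to uncovered edges (in any order). For a clique cover $\{C_\ell\}_{\ell\in I}$, the admissibility sets are $A_v:=\{\ell\in I: C_\ell\subseteq N[v]\}$, $v\in V$. *)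

theory Defs
  imports Complex_Main
begin

definition simple_graph :: "'a set \<Rightarrow> 'a set set \<Rightarrow> bool" where
  "simple_graph V E \<longleftrightarrow> finite V
     \<and> (\<forall>e\<in>E. \<exists>u v. e = {u, v} \<and> u \<noteq> v \<and> u \<in> V \<and> v \<in> V)
     \<and> (\<forall>v\<in>V. \<exists>e\<in>E. v \<in> e)"

definition is_clique :: "'a set \<Rightarrow> 'a set set \<Rightarrow> 'a set \<Rightarrow> bool" where
  "is_clique V E C \<longleftrightarrow> C \<subseteq> V \<and> (\<forall>u\<in>C. \<forall>v\<in>C. u \<noteq> v \<longrightarrow> {u, v} \<in> E)"

definition closed_nbhd :: "'a set set \<Rightarrow> 'a \<Rightarrow> 'a set" where
  "closed_nbhd E v = {u. {u, v} \<in> E} \<union> {v}"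

text \<open>A family of cliques is an indexed family, represented as a list; labels are the list indices.\<close>
definition uncovered :: "'a set set \<Rightarrow> 'a set list \<Rightarrow> 'a set \<Rightarrow> bool" where
  "uncovered E Cs e \<longleftrightarrow> e \<in> E \<and> \<not> (\<exists>C\<in>set Cs. e \<subseteq> C)"

inductive la_step :: "'a set \<Rightarrow> 'a set set \<Rightarrow> 'a set list \<Rightarrow> 'a set list \<Rightarrow> bool"
  for V E where
  extend: "\<lbrakk> uncovered E Cs {u, v}; i < length Cs; is_clique V E (Cs ! i \<union> {u, v}) \<rbrakk>
           \<Longrightarrow> la_step V E Cs (Cs[i := Cs ! i \<union> {u, v}])"
| new: "\<lbrakk> uncovered E Cs {u, v}; \<not> (\<exists>i < length Cs. is_clique V E (Cs ! i \<union> {u, v})) \<rbrakk>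
           \<Longrightarrow> la_step V E Cs (Cs @ [{u, v}])"

definition la_succinct_cover :: "'a set \<Rightarrow> 'a set set \<Rightarrow> 'a set list \<Rightarrow> bool" where
  "la_succinct_cover V E Cs \<longleftrightarrow> (la_step V E)\<^sup>*\<^sup>* [] Cs \<and> (\<forall>e\<in>E. \<exists>C\<in>set Cs. e \<subseteq> C)"

definition adm_set :: "'a set set \<Rightarrow> 'a set list \<Rightarrow> 'a \<Rightarrow> nat set" where
  "adm_set E Cs v = {l. l < length Cs \<and> Cs ! l \<subseteq> closed_nbhd E v}"

definition adm_size :: "'a set \<Rightarrow> 'a set set \<Rightarrow> 'a set list \<Rightarrow> nat" where
  "adm_size V E Cs = (\<Sum>v\<in>V. card (adm_set E Cs v))"

end

theory Submission
  imports Defs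
begin

lemma step_mono:
  assumes "la_step V E Cs Cs'"
  shows "\<forall>C\<in>set Cs. \<exists>C'\<in>set Cs'. C \<subseteq> C'"
  using assms
proof cases
  case (extend u v i)
  show ?thesis
  proof
    fix C assume "C \<in> set Cs"
    then obtain j where j: "j < length Cs" "C = Cs ! j" by (auto simp: in_set_conv_nth)
    show "\<exists>C'\<in>set Cs'. C \<subseteq> C'"
    proof (cases "j = i")
      case True
      then show ?thesis using extend j
        by (metis Un_upper1 length_list_update nth_list_update_eq nth_mem)
    next
      case False
      then show ?thesis using extend j
        by (metis length_list_update nth_list_update_neq nth_mem order_refl)
    qed
  qed
next
  case (new u v)
  then show ?thesis by auto
qed

lemma step_exists:
  assumes "uncovered E Cs {u, v}"
  shows "\<exists>Cs'. la_step V E Cs Cs' \<and> (\<exists>C\<in>set Cs'. {u, v} \<subseteq> C)"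
proof (cases "\<exists>i < length Cs. is_clique V E (Cs ! i \<union> {u, v})")
  case True
  then obtain i where i: "i < length Cs" "is_clique V E (Cs ! i \<union> {u, v})" by blast
  have "la_step V E Cs (Cs[i := Cs ! i \<union> {u, v}])" using la_step.extend[OF assms i] .
  moreover have "Cs[i := Cs ! i \<union> {u, v}] ! i \<in> set (Cs[i := Cs ! i \<union> {u, v}])"
    using i by (simp add: set_update_memI)
  ultimately show ?thesis using i by (metis Un_upper2 nth_list_update_eq)
next
  case False
  have "la_step V E Cs (Cs @ [{u, v}])" using la_step.new[OF assms False] .
  then show ?thesis by auto
qed

definition unc :: "'a set set \<Rightarrow> 'a set list \<Rightarrow> 'a set set" where
  "unc E Cs = {e\<in>E. uncovered E Cs e}"

lemma cover_exists:
  assumes fin: "finite E" and pairs: "\<forall>e\<in>E. \<exists>u v. e = {u, v}"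
  shows "\<exists>Cs'. (la_step V E)\<^sup>*\<^sup>* Cs Cs' \<and> (\<forall>e\<in>E. \<exists>C\<in>set Cs'. e \<subseteq> C)"
proof (induction "card (unc E Cs)" arbitrary: Cs rule: less_induct)
  case less
  show ?case
  proof (cases "unc E Cs = {}")
    case True
    then have "\<forall>e\<in>E. \<exists>C\<in>set Cs. e \<subseteq> C" by (auto simp: unc_def uncovered_def)
    then show ?thesis by blast
  next
    case False
    then obtain e where e: "e \<in> unc E Cs" by blast
    then obtain u v where uv: "e = {u, v}" using pairs unfolding unc_def by blast
    then have "uncovered E Cs {u, v}" using e unfolding unc_def by simp
    from step_exists[OF this, of V] obtain Cs' where
      st: "la_step V E Cs Cs'" and cov: "\<exists>C\<in>set Cs'. {u, v} \<subseteq> C" by blast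
    have sub: "unc E Cs' \<subseteq> unc E Cs"
    proof
      fix f assume "f \<in> unc E Cs'"
      then have "f \<in> E" "\<not> (\<exists>C\<in>set Cs'. f \<subseteq> C)" unfolding unc_def uncovered_def by auto
      moreover have "\<forall>C\<in>set Cs. \<exists>C'\<in>set Cs'. C \<subseteq> C'" using step_mono[OF st] .
      ultimately have "\<not> (\<exists>C\<in>set Cs. f \<subseteq> C)" by (meson order_trans)
      then show "f \<in> unc E Cs" using \<open>f \<in> E\<close> unfolding unc_def uncovered_def by simp
    qed
    have "e \<notin> unc E Cs'" using cov uv unfolding unc_def uncovered_def by blast
    then have "unc E Cs' \<subset> unc E Cs" using sub e by blast
    moreover have "finite (unc E Cs)" using fin unfolding unc_def by simp
    ultimately have "card (unc E Cs') < card (unc E Cs)" by (simp add: psubset_card_mono)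
    from less[OF this] obtain Cs'' where
      r: "(la_step V E)\<^sup>*\<^sup>* Cs' Cs''" and c: "\<forall>e\<in>E. \<exists>C\<in>set Cs''. e \<subseteq> C" by blast
    have "(la_step V E)\<^sup>*\<^sup>* Cs Cs''" by (rule converse_rtranclp_into_rtranclp[OF st r])
    then show ?thesis using c by blast
  qed
qed

lemma edge_in_V:
  assumes "simple_graph V E" "e \<in> E" "x \<in> e" shows "x \<in> V"
proof -
  obtain a b where "e = {a, b}" "a \<in> V" "b \<in> V"
    using assms(1,2) unfolding simple_graph_def by meson
  then show ?thesis using assms(3) by auto
qed

lemma edge_clique:
  assumes "simple_graph V E" "{u, v} \<in> E" shows "is_clique V E {u, v}"
  unfolding is_clique_def
proof (intro conjI ballI impI)
  show "{u, v} \<subseteq> V" using edge_in_V[OF assms] by blast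
next
  fix x y assume "x \<in> {u, v}" "y \<in> {u, v}" "x \<noteq> y"
  then have "{x, y} = {u, v}" by blast
  then show "{x, y} \<in> E" using assms(2) by simp
qed

lemma cliques_inv:
  assumes "(la_step V E)\<^sup>*\<^sup>* Cs0 Cs" "\<forall>C\<in>set Cs0. is_clique V E C" "simple_graph V E"
  shows "\<forall>C\<in>set Cs. is_clique V E C"
  using assms(1)
proof (induction rule: rtranclp_induct)
  case base
  then show ?case using assms(2) .
next
  case (step y z)
  from step.hyps(2) show ?case
  proof cases
    case (extend u v i)
    have "set z \<subseteq> insert (y ! i \<union> {u, v}) (set y)"
      using extend(1) set_update_subset_insert by metis
    moreover have "is_clique V E (y ! i \<union> {u, v})" using extend(4) .
    ultimately show ?thesis using step.IH by blast
  next
    case (new u v)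
    have "{u, v} \<in> E" using new(2) unfolding uncovered_def by simp
    then have "is_clique V E {u, v}" using edge_clique[OF assms(3)] by simp
    then show ?thesis using new(1) step.IH by simp
  qed
qed

definition adjt :: "nat \<Rightarrow> nat \<Rightarrow> nat \<Rightarrow> bool" where
  "adjt t x y \<longleftrightarrow> x \<noteq> y \<and> (2*t \<le> x \<or> 2*t \<le> y \<or> ((x < t) \<noteq> (y < t)))"

definition Vt :: "nat \<Rightarrow> nat set" where "Vt t = {..<3*t}"

definition Et :: "nat \<Rightarrow> nat set set" where
  "Et t = {{x, y} | x y. x < 3*t \<and> y < 3*t \<and> adjt t x y}"

lemma adjt_sym: "adjt t x y = adjt t y x"
  unfolding adjt_def by auto

lemma memE: "{x, y} \<in> Et t \<longleftrightarrow> x < 3*t \<and> y < 3*t \<and> adjt t x y"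
proof
  assume "{x, y} \<in> Et t"
  then obtain x' y' where "{x, y} = {x', y'}" "x' < 3*t" "y' < 3*t" "adjt t x' y'"
    unfolding Et_def by blast
  then show "x < 3*t \<and> y < 3*t \<and> adjt t x y"
    by (metis adjt_sym doubleton_eq_iff)
qed (auto simp: Et_def)

lemma Et_sub: "Et t \<subseteq> (\<lambda>(x, y). {x, y}) ` (Vt t \<times> Vt t)"
  unfolding Et_def Vt_def by auto

lemma fin_Et: "finite (Et t)"
  by (rule finite_subset[OF Et_sub]) (simp add: Vt_def)

lemma card_Vt: "card (Vt t) = 3*t" unfolding Vt_def by simp

lemma card_Et_le: "card (Et t) \<le> 9 * t^2"
proof -
  have "card (Et t) \<le> card ((\<lambda>(x, y). {x, y}) ` (Vt t \<times> Vt t))"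
    using Et_sub by (intro card_mono) (auto simp: Vt_def)
  also have "\<dots> \<le> card (Vt t \<times> Vt t)" by (rule card_image_le) (simp add: Vt_def)
  also have "\<dots> = 9 * t^2" by (simp add: card_cartesian_product card_Vt power2_eq_square)
  finally show ?thesis .
qed

lemma card_Et_ge: "t^2 \<le> card (Et t)"
proof -
  have inj: "inj_on (\<lambda>(a, b). {a, b}) ({..<t} \<times> {t..<2*t})"
    by (auto simp: inj_on_def doubleton_eq_iff)
  have "(\<lambda>(a, b). {a, b}) ` ({..<t} \<times> {t..<2*t}) \<subseteq> Et t"
    by (auto simp: memE adjt_def)
  then have "card ({..<t} \<times> {t..<2*t}) \<le> card (Et t)"
    using card_inj_on_le[OF inj _ fin_Et] by blast
  then show ?thesis by (simp add: card_cartesian_product power2_eq_square)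
qed

lemma sg: assumes "t \<ge> 1" shows "simple_graph (Vt t) (Et t)"
  unfolding simple_graph_def
proof (intro conjI ballI)
  show "finite (Vt t)" by (simp add: Vt_def)
next
  fix e assume "e \<in> Et t"
  then obtain x y where "e = {x, y}" "x < 3*t" "y < 3*t" "adjt t x y" unfolding Et_def by blast
  then show "\<exists>u v. e = {u, v} \<and> u \<noteq> v \<and> u \<in> Vt t \<and> v \<in> Vt t"
    unfolding Vt_def adjt_def by auto
next
  fix v assume v: "v \<in> Vt t"
  show "\<exists>e\<in>Et t. v \<in> e"
  proof (cases "v = 2*t")
    case True
    then have "{v, 0} \<in> Et t" using assms by (simp add: memE adjt_def)
    then show ?thesis by blast
  next
    case False
    then have "{v, 2*t} \<in> Et t" using assms v by (simp add: memE adjt_def Vt_def)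
    then show ?thesis by blast
  qed
qed

lemma length_ge:
  assumes cl: "\<forall>C\<in>set Cs. is_clique (Vt t) (Et t) C"
    and cov: "\<forall>e\<in>Et t. \<exists>C\<in>set Cs. e \<subseteq> C"
  shows "t^2 \<le> length Cs"
proof -
  define f where "f = (\<lambda>(a::nat, b::nat). SOME l. l < length Cs \<and> {a, b} \<subseteq> Cs ! l)"
  have fp: "f (a, b) < length Cs \<and> {a, b} \<subseteq> Cs ! f (a, b)" if "a < t" "t \<le> b" "b < 2*t" for a b
  proof -
    have "{a, b} \<in> Et t" using that by (simp add: memE adjt_def)
    then obtain C where "C \<in> set Cs" "{a, b} \<subseteq> C" using cov by blast
    then have "\<exists>l. l < length Cs \<and> {a, b} \<subseteq> Cs ! l" by (metis in_set_conv_nth)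
    then show ?thesis unfolding f_def by simp (rule someI_ex)
  qed
  have inj: "inj_on f ({..<t} \<times> {t..<2*t})"
  proof (rule inj_onI)
    fix p q assume p: "p \<in> {..<t} \<times> {t..<2*t}" and q: "q \<in> {..<t} \<times> {t..<2*t}" and eq: "f p = f q"
    obtain a b where ab: "p = (a, b)" by force
    obtain a' b' where ab': "q = (a', b')" by force
    have h1: "f (a, b) < length Cs" "{a, b} \<subseteq> Cs ! f (a, b)" using fp p ab by auto
    have h2: "{a', b'} \<subseteq> Cs ! f (a, b)" using fp q ab' eq ab by auto
    have "is_clique (Vt t) (Et t) (Cs ! f (a, b))" using cl h1 by auto
    then have c: "\<And>x y. x \<in> Cs ! f (a, b) \<Longrightarrow> y \<in> Cs ! f (a, b) \<Longrightarrow> x \<noteq> y \<Longrightarrow> adjt t x y"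
      unfolding is_clique_def by (auto simp: memE)
    have "a = a'"
    proof (rule ccontr)
      assume "a \<noteq> a'"
      then have "adjt t a a'" using c h1 h2 by auto
      then show False using p q ab ab' by (auto simp: adjt_def)
    qed
    moreover have "b = b'"
    proof (rule ccontr)
      assume "b \<noteq> b'"
      then have "adjt t b b'" using c h1 h2 by auto
      then show False using p q ab ab' by (auto simp: adjt_def)
    qed
    ultimately show "p = q" using ab ab' by simp
  qed
  have "f ` ({..<t} \<times> {t..<2*t}) \<subseteq> {..<length Cs}" using fp by auto
  then have "card ({..<t} \<times> {t..<2*t}) \<le> card {..<length Cs}"
    using card_inj_on_le[OF inj] by blast
  then show ?thesis by (simp add: card_cartesian_product power2_eq_square)
qed

lemma adm_ge:
  assumes cl: "\<forall>C\<in>set Cs. is_clique (Vt t) (Et t) C"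
  shows "t * length Cs \<le> adm_size (Vt t) (Et t) Cs"
proof -
  have full: "adm_set (Et t) Cs w = {..<length Cs}" if "2*t \<le> w" "w < 3*t" for w
  proof -
    have "Cs ! l \<subseteq> closed_nbhd (Et t) w" if "l < length Cs" for l
    proof
      fix x assume x: "x \<in> Cs ! l"
      have "x < 3*t" using cl that x nth_mem unfolding is_clique_def Vt_def by blast
      then show "x \<in> closed_nbhd (Et t) w"
        using \<open>2*t \<le> w\<close> \<open>w < 3*t\<close> by (auto simp: closed_nbhd_def memE adjt_def)
    qed
    then show ?thesis unfolding adm_set_def by auto
  qed
  have "t * length Cs = (\<Sum>w\<in>{2*t..<3*t}. card (adm_set (Et t) Cs w))"
    using full by simp
  also have "\<dots> \<le> adm_size (Vt t) (Et t) Cs"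
    unfolding adm_size_def Vt_def by (rule sum_mono2) auto
  finally show ?thesis .
qed

lemma per_t:
  fixes t :: nat assumes t: "t \<ge> 1"
  shows "\<exists>(V :: nat set) (E :: nat set set) Cs.
         simple_graph V E \<and>
         1 * real t \<le> real (card V) \<and> real (card V) \<le> 9 * real t \<and>
         1 * real t ^ 2 \<le> real (card E) \<and> real (card E) \<le> 9 * real t ^ 2 \<and>
         la_succinct_cover V E Cs \<and>
         real (adm_size V E Cs) \<ge> 1/27 * real (card V) * real (card E)"
proof -
  have g: "simple_graph (Vt t) (Et t)" using sg[OF t] .
  have pairs: "\<forall>e\<in>Et t. \<exists>u v. e = {u, v}" unfolding Et_def by blast
  obtain Cs where r: "(la_step (Vt t) (Et t))\<^sup>*\<^sup>* [] Cs" and cov: "\<forall>e\<in>Et t. \<exists>C\<in>set Cs. e \<subseteq> C"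
    using cover_exists[OF fin_Et pairs, of "Vt t" "[]"] by blast
  have cl: "\<forall>C\<in>set Cs. is_clique (Vt t) (Et t) C" using cliques_inv[OF r _ g] by simp
  have L: "t^2 \<le> length Cs" using length_ge[OF cl cov] .
  have A: "t * length Cs \<le> adm_size (Vt t) (Et t) Cs" using adm_ge[OF cl] .
  have A3: "real t ^ 3 \<le> real (adm_size (Vt t) (Et t) Cs)"
  proof -
    have "t * t^2 \<le> t * length Cs" using L by (rule mult_left_mono) simp
    then have "t * t^2 \<le> adm_size (Vt t) (Et t) Cs" using A by (rule le_trans)
    then have "t^3 \<le> adm_size (Vt t) (Et t) Cs" by (simp add: power3_eq_cube power2_eq_square mult.assoc)
    then show ?thesis by (metis of_nat_le_iff of_nat_power)
  qed
  have E1: "real t ^ 2 \<le> real (card (Et t))" using card_Et_ge[of t] by (metis of_nat_le_iff of_nat_power)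
  have E2: "real (card (Et t)) \<le> 9 * real t ^ 2" using card_Et_le[of t]
    by (metis of_nat_le_iff of_nat_power of_nat_mult of_nat_numeral)
  have "1/27 * real (card (Vt t)) * real (card (Et t)) = real t / 9 * real (card (Et t))"
    by (simp add: card_Vt)
  also have "\<dots> \<le> real t / 9 * (9 * real t ^ 2)" using E2 by (intro mult_left_mono) auto
  also have "\<dots> = real t ^ 3" by (simp add: power3_eq_cube power2_eq_square)
  finally have fin: "1/27 * real (card (Vt t)) * real (card (Et t)) \<le> real (adm_size (Vt t) (Et t) Cs)"
    using A3 by linarith
  have "simple_graph (Vt t) (Et t) \<and>
         1 * real t \<le> real (card (Vt t)) \<and> real (card (Vt t)) \<le> 9 * real t \<and>
         1 * real t ^ 2 \<le> real (card (Et t)) \<and> real (card (Et t)) \<le> 9 * real t ^ 2 \<and>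
         la_succinct_cover (Vt t) (Et t) Cs \<and>
         real (adm_size (Vt t) (Et t) Cs) \<ge> 1/27 * real (card (Vt t)) * real (card (Et t))"
    using g E1 E2 fin r cov card_Vt[of t] by (simp add: la_succinct_cover_def)
  then show ?thesis by blast
qed

theorem mainTheorem16:
  shows "\<exists>c1 c2 c3 :: real. c1 > 0 \<and> c2 > 0 \<and> c3 > 0 \<and>
    (\<forall>t::nat. t \<ge> 1 \<longrightarrow>
      (\<exists>(V :: nat set) (E :: nat set set) Cs.
         simple_graph V E \<and>
         c1 * real t \<le> real (card V) \<and> real (card V) \<le> c2 * real t \<and>
         c1 * real t ^ 2 \<le> real (card E) \<and> real (card E) \<le> c2 * real t ^ 2 \<and>
         la_succinct_cover V E Cs \<and>
         real (adm_size V E Cs) \<ge> c3 * real (card V) * real (card E)))"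
proof -
  have "\<forall>t::nat. t \<ge> 1 \<longrightarrow>
      (\<exists>(V :: nat set) (E :: nat set set) Cs.
         simple_graph V E \<and>
         1 * real t \<le> real (card V) \<and> real (card V) \<le> 9 * real t \<and>
         1 * real t ^ 2 \<le> real (card E) \<and> real (card E) \<le> 9 * real t ^ 2 \<and>
         la_succinct_cover V E Cs \<and>
         real (adm_size V E Cs) \<ge> 1/27 * real (card V) * real (card E))"
    by (intro allI impI) (rule per_t)
  note H = this
  show ?thesis
    apply (rule exI[where x="1::real"])
    apply (rule exI[where x="9::real"])
    apply (rule exI[where x="1/27::real"])
    apply (intro conjI)
       apply simp
      apply simp
     apply simp
    by (rule H)
qed

end
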